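(* Let $G$ be a graph with girth at least $7$. If $G$ contains a path $s_1u_1vu_2s_2$ such that $s_1$ and $s_2$ are support vertices and, for each $i\in\{1,2\}$, $u_i$ is the only neighbor of $s_i$ having degree at least $2$, then $G\notin\mathcal U$.
   Context: All graphs are finite and simple. A set $P\subseteq V(G)$ is an open packing if no two distinct vertices of $P$ have a common neighbor; it is maximal if maximal under inclusion among open packings. $\rho^o(G)$ is the maximum size of an open packing and $\rho^o_L(G)$ the minimum size of a maximal open packing; $\mathcal U$ is the class of graphs with $\rho^o_L(G)=\rho^o(G)$. A leaf is a vertex of degree $1$; a support vertex is a vertex adjacent to at least one leaf. The girth is the length of a shortest cycle ($\infty$ if acyclic). *)

theory Defs
  imports Main
begin

definition graph :: "'a set \<Rightarrow> ('a \<Rightarrow> 'a \<Rightarrow> bool) \<Rightarrow> bool" where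
  "graph V E \<longleftrightarrow> finite V \<and> (\<forall>x y. E x y \<longrightarrow> x \<in> V \<and> y \<in> V)
     \<and> (\<forall>x y. E x y \<longrightarrow> E y x) \<and> (\<forall>x. \<not> E x x)"

definition nbhd :: "'a set \<Rightarrow> ('a \<Rightarrow> 'a \<Rightarrow> bool) \<Rightarrow> 'a \<Rightarrow> 'a set" where
  "nbhd V E v = {u \<in> V. E v u}"

definition degree :: "'a set \<Rightarrow> ('a \<Rightarrow> 'a \<Rightarrow> bool) \<Rightarrow> 'a \<Rightarrow> nat" where
  "degree V E v = card (nbhd V E v)"

definition leaf :: "'a set \<Rightarrow> ('a \<Rightarrow> 'a \<Rightarrow> bool) \<Rightarrow> 'a \<Rightarrow> bool" where
  "leaf V E v \<longleftrightarrow> v \<in> V \<and> degree V E v = 1"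

definition support_vertex :: "'a set \<Rightarrow> ('a \<Rightarrow> 'a \<Rightarrow> bool) \<Rightarrow> 'a \<Rightarrow> bool" where
  "support_vertex V E v \<longleftrightarrow> v \<in> V \<and> (\<exists>u. E v u \<and> leaf V E u)"

definition is_cycle :: "'a set \<Rightarrow> ('a \<Rightarrow> 'a \<Rightarrow> bool) \<Rightarrow> 'a list \<Rightarrow> bool" where
  "is_cycle V E cs \<longleftrightarrow> length cs \<ge> 3 \<and> distinct cs \<and> set cs \<subseteq> V
     \<and> (\<forall>i < length cs. E (cs ! i) (cs ! ((i + 1) mod length cs)))"

definition girth_at_least :: "'a set \<Rightarrow> ('a \<Rightarrow> 'a \<Rightarrow> bool) \<Rightarrow> nat \<Rightarrow> bool" where
  "girth_at_least V E k \<longleftrightarrow> (\<forall>cs. is_cycle V E cs \<longrightarrow> length cs \<ge> k)"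

definition open_packing :: "'a set \<Rightarrow> ('a \<Rightarrow> 'a \<Rightarrow> bool) \<Rightarrow> 'a set \<Rightarrow> bool" where
  "open_packing V E P \<longleftrightarrow> P \<subseteq> V \<and>
     (\<forall>x \<in> P. \<forall>y \<in> P. x \<noteq> y \<longrightarrow> \<not> (\<exists>w. E x w \<and> E y w))"

definition maximal_open_packing :: "'a set \<Rightarrow> ('a \<Rightarrow> 'a \<Rightarrow> bool) \<Rightarrow> 'a set \<Rightarrow> bool" where
  "maximal_open_packing V E P \<longleftrightarrow> open_packing V E P \<and>
     (\<forall>Q. open_packing V E Q \<and> P \<subseteq> Q \<longrightarrow> Q = P)"

definition rho_o :: "'a set \<Rightarrow> ('a \<Rightarrow> 'a \<Rightarrow> bool) \<Rightarrow> nat" where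
  "rho_o V E = Max (card ` {P. open_packing V E P})"

definition rho_oL :: "'a set \<Rightarrow> ('a \<Rightarrow> 'a \<Rightarrow> bool) \<Rightarrow> nat" where
  "rho_oL V E = Min (card ` {P. maximal_open_packing V E P})"

definition in_U :: "'a set \<Rightarrow> ('a \<Rightarrow> 'a \<Rightarrow> bool) \<Rightarrow> bool" where
  "in_U V E \<longleftrightarrow> rho_oL V E = rho_o V E"

end

theory Submission
  imports Defs
begin

lemma deg2:
  assumes g: "graph V E" and "E w a" "E w b" "a \<noteq> b"
  shows "degree V E w \<ge> 2"
proof -
  have f: "finite (nbhd V E w)" using g unfolding graph_def nbhd_def by auto
  have "{a,b} \<subseteq> nbhd V E w" using assms unfolding graph_def nbhd_def by auto
  hence "card {a,b} \<le> card (nbhd V E w)" using f card_mono by blast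
  thus ?thesis using assms(4) unfolding degree_def by simp
qed

lemma swap_ok:
  assumes g: "graph V E" and op: "open_packing V E P" and vP: "v \<in> P"
    and e1: "E s1 u1" and e2: "E u1 v" and ne: "s1 \<noteq> v"
    and h: "\<forall>w. E s1 w \<and> degree V E w \<ge> 2 \<longleftrightarrow> w = u1"
    and x: "x \<in> P" "x \<noteq> v" "E x w" "E s1 w"
  shows "x = s1"
proof (rule ccontr)
  assume nx: "x \<noteq> s1"
  have sym: "\<And>a b. E a b \<Longrightarrow> E b a" using g unfolding graph_def by blast
  have "degree V E w \<ge> 2" using deg2[OF g sym[OF x(3)] sym[OF x(4)] nx] .
  moreover have "(E s1 w \<and> 2 \<le> degree V E w) = (w = u1)" using h by (rule spec)
  ultimately have "w = u1" using x(4) by simp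
  hence "E x u1" "E v u1" using x(3) sym[OF e2] by auto
  moreover have "\<forall>a\<in>P. \<forall>b\<in>P. a \<noteq> b \<longrightarrow> \<not> (\<exists>w. E a w \<and> E b w)"
    using op unfolding open_packing_def by (rule conjunct2)
  ultimately show False using x(1,2) vP by blast
qed

theorem lemma4:
  fixes V :: "'a set" and E :: "'a \<Rightarrow> 'a \<Rightarrow> bool" and s1 u1 v u2 s2 :: 'a
  assumes "graph V E"
    and "girth_at_least V E 7"
    and "distinct [s1, u1, v, u2, s2]"
    and "E s1 u1" and "E u1 v" and "E v u2" and "E u2 s2"
    and "support_vertex V E s1" and "support_vertex V E s2"
    and "\<forall>w. E s1 w \<and> degree V E w \<ge> 2 \<longleftrightarrow> w = u1"
    and "\<forall>w. E s2 w \<and> degree V E w \<ge> 2 \<longleftrightarrow> w = u2"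
  shows "\<not> in_U V E"
proof -
  note g = assms(1)
  have sym: "\<And>a b. E a b \<Longrightarrow> E b a" using g unfolding graph_def by blast
  have inV: "\<And>a b. E a b \<Longrightarrow> a \<in> V \<and> b \<in> V" using g unfolding graph_def by blast
  have fV: "finite V" using g unfolding graph_def by blast
  have finPow: "finite {P. P \<subseteq> V}" using fV by simp
  define F where "F = {P. open_packing V E P \<and> v \<in> P}"
  have vV: "v \<in> V" using inV assms(5) by blast
  have "{v} \<in> F" unfolding F_def open_packing_def using vV by auto
  have fF: "finite F" by (rule finite_subset[OF _ finPow]) (auto simp: F_def open_packing_def)
  have "Max (card ` F) \<in> card ` F" using fF \<open>{v} \<in> F\<close> by (intro Max_in) auto
  then obtain P where PF: "P \<in> F" and cP: "card P = Max (card ` F)" by auto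
  have opP: "open_packing V E P" and vP: "v \<in> P" using PF F_def by auto
  have finP: "finite P" using opP fV unfolding open_packing_def using finite_subset by blast
  have maxP: "maximal_open_packing V E P"
    unfolding maximal_open_packing_def
  proof (intro conjI allI impI opP)
    fix Q assume a: "open_packing V E Q \<and> P \<subseteq> Q"
    hence QF: "Q \<in> F" using vP F_def by auto
    have fQ: "finite Q" using a fV unfolding open_packing_def using finite_subset by blast
    have "card Q \<le> card P" using cP fF QF by simp
    thus "Q = P" using a fQ card_seteq by blast
  qed
  have dist: "s1 \<noteq> s2" "s1 \<noteq> v" "s2 \<noteq> v" "u1 \<noteq> u2" using assms(3) by auto
  have pk: "\<And>a b w. a \<in> P \<Longrightarrow> b \<in> P \<Longrightarrow> a \<noteq> b \<Longrightarrow> E a w \<Longrightarrow> E b w \<Longrightarrow> False"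
    using opP unfolding open_packing_def by blast
  have s1nP: "s1 \<notin> P"
    using pk[OF _ vP dist(2) assms(4) sym[OF assms(5)]] by blast
  have s2nP: "s2 \<notin> P"
    using pk[OF _ vP dist(3) sym[OF assms(7)] assms(6)] by blast
  define P' where "P' = insert s1 (insert s2 (P - {v}))"
  have s1s2: "\<not> (\<exists>w. E s1 w \<and> E s2 w)"
  proof
    assume "\<exists>w. E s1 w \<and> E s2 w"
    then obtain w where w: "E s1 w" "E s2 w" by blast
    have "degree V E w \<ge> 2" using deg2[OF g sym[OF w(1)] sym[OF w(2)] dist(1)] .
    moreover have "(E s1 w \<and> 2 \<le> degree V E w) = (w = u1)" using assms(10) by (rule spec)
    moreover have "(E s2 w \<and> 2 \<le> degree V E w) = (w = u2)" using assms(11) by (rule spec)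
    ultimately have "w = u1" "w = u2" using w by simp_all
    thus False using dist by simp
  qed
  have h2: "\<forall>w. E s2 w \<and> degree V E w \<ge> 2 \<longleftrightarrow> w = u2" using assms(11) .
  have opP': "open_packing V E P'"
    unfolding open_packing_def
  proof (intro conjI ballI impI)
    show "P' \<subseteq> V" using opP inV assms(4,7) unfolding P'_def open_packing_def by auto
  next
    fix x y assume xy: "x \<in> P'" "y \<in> P'" "x \<noteq> y"
    have c1: "\<And>x w. x \<in> P \<Longrightarrow> x \<noteq> v \<Longrightarrow> E x w \<Longrightarrow> E s1 w \<Longrightarrow> False"
      using swap_ok[OF g opP vP assms(4,5) dist(2) assms(10)] s1nP by blast
    have c2: "\<And>x w. x \<in> P \<Longrightarrow> x \<noteq> v \<Longrightarrow> E x w \<Longrightarrow> E s2 w \<Longrightarrow> False"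
      using swap_ok[OF g opP vP sym[OF assms(7)] sym[OF assms(6)] dist(3) h2] s2nP by blast
    show "\<not> (\<exists>w. E x w \<and> E y w)"
    proof
      assume "\<exists>w. E x w \<and> E y w"
      then obtain w where w: "E x w" "E y w" by blast
      have xc: "x = s1 \<or> x = s2 \<or> (x \<in> P \<and> x \<noteq> v)" using xy(1) unfolding P'_def by auto
      have yc: "y = s1 \<or> y = s2 \<or> (y \<in> P \<and> y \<noteq> v)" using xy(2) unfolding P'_def by auto
      show False
      proof -
        have sw1: "\<And>a. a \<in> P \<Longrightarrow> a \<noteq> v \<Longrightarrow> E a w \<Longrightarrow> E s1 w \<Longrightarrow> False" using c1 by blast
        show False using xc yc xy(3) w c1 c2 s1s2 pk by blast
      qed
    qed
  qed
  have cP': "card P' = card P + 1"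
  proof -
    have "card (P - {v}) = card P - 1" by (rule card_Diff_singleton[OF vP])
    moreover have "card P \<ge> 1" using finP vP by (metis One_nat_def Suc_leI card_gt_0_iff empty_iff)
    moreover have "finite (P - {v})" using finP by simp
    moreover have "s2 \<notin> P - {v}" "s1 \<notin> insert s2 (P - {v})" using s1nP s2nP dist by auto
    ultimately show ?thesis unfolding P'_def by simp
  qed
  have fM: "finite {P. maximal_open_packing V E P}"
    by (rule finite_subset[OF _ finPow]) (auto simp: maximal_open_packing_def open_packing_def)
  have fO: "finite {P. open_packing V E P}"
    by (rule finite_subset[OF _ finPow]) (auto simp: open_packing_def)
  have "rho_oL V E \<le> card P" unfolding rho_oL_def using fM maxP by (intro Min_le) auto
  moreover have "card P' \<le> rho_o V E" unfolding rho_o_def using fO opP' by (intro Max_ge) auto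
  ultimately show ?thesis unfolding in_U_def using cP' by linarith
qed

end
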